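(* Let $q>0$, let $a:[0,\infty)\to[0,\infty)$ be continuous and let $r:[0,\infty)\to[0,q]$ be continuous. Let $\varphi\in C([-q,0],\mathbb R)$, let $x=x(\varphi)$ be the solution on $[-q,\infty)$ of $$x'(t)=-a(t)x(t-r(t)),\ t\ge0,\qquad x(t)=\varphi(t),\ -q\le t\le 0,$$ and for every integer $k\ge1$ and $h=q/k$ let $z_h=z_h(\varphi)$ be the solution of $$z_h'(t)=-a(t)\,z_h\big((i-k_i)h\big)\ \ (t\in[ih,(i+1)h),\ i\ge0),\qquad z_h(nh)=\varphi(nh),\ n=-k,\dots,0.$$ Then for every $T>0$ and every such $h$, $$\max_{0\le t\le T}|x(t)-z_h(t)|\le e^{\int_0^T a(s)ds}\Big(\int_0^T a(s)\,ds\Big)\,w_x\big(w_r(h;T)+2h;T\big),$$ and consequently $\lim_{h\to0}\max_{0\le t\le T}|x(t)-z_h(t)|=0$ for every $T>0$ (limit along $h=q/k$, $k\to\infty$).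
   Context: Here $k_i:=\lfloor r(ih)/h\rfloor$ for $i\ge0$; a solution $z_h$ is a function defined on the grid points $\{nh:n=-k,\dots,0\}$ and on $[0,\infty)$, continuous on $[0,\infty)$, differentiable except possibly at the points $ih$ (where finite one-sided derivatives exist), and satisfying the equation on each $[ih,(i+1)h)$. The moduli of continuity are $w_r(h;T)=\max\{|r(t_2)-r(t_1)|:\ 0\le t_1,t_2\le T,\ |t_2-t_1|\le h\}$ and $w_x(\delta;T)=\max\{|x(t_2)-x(t_1)|:\ -q\le t_1,t_2\le T,\ |t_2-t_1|\le \delta\}$. *)

theory Defs
  imports "HOL-Analysis.Analysis"
begin

definition mod_r :: "(real \<Rightarrow> real) \<Rightarrow> real \<Rightarrow> real \<Rightarrow> real" where
  "mod_r r h T = Sup {\<bar>r t2 - r t1\<bar> | t1 t2. 0 \<le> t1 \<and> t1 \<le> T \<and> 0 \<le> t2 \<and> t2 \<le> T \<and> \<bar>t2 - t1\<bar> \<le> h}"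

definition mod_x :: "real \<Rightarrow> (real \<Rightarrow> real) \<Rightarrow> real \<Rightarrow> real \<Rightarrow> real" where
  "mod_x q x \<delta> T = Sup {\<bar>x t2 - x t1\<bar> | t1 t2. -q \<le> t1 \<and> t1 \<le> T \<and> -q \<le> t2 \<and> t2 \<le> T \<and> \<bar>t2 - t1\<bar> \<le> \<delta>}"

definition is_sol_x :: "real \<Rightarrow> (real \<Rightarrow> real) \<Rightarrow> (real \<Rightarrow> real) \<Rightarrow> (real \<Rightarrow> real) \<Rightarrow> (real \<Rightarrow> real) \<Rightarrow> bool" where
  "is_sol_x q a r \<phi> x \<longleftrightarrow>
     continuous_on {-q..} x \<and>
     (\<forall>t\<in>{-q..0}. x t = \<phi> t) \<and>
     (\<forall>t\<ge>0. (x has_real_derivative (- a t * x (t - r t))) (at t within {0..}))"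

definition kidx :: "(real \<Rightarrow> real) \<Rightarrow> real \<Rightarrow> nat \<Rightarrow> int" where
  "kidx r h i = \<lfloor>r (real i * h) / h\<rfloor>"

definition is_sol_z :: "real \<Rightarrow> (real \<Rightarrow> real) \<Rightarrow> (real \<Rightarrow> real) \<Rightarrow> (real \<Rightarrow> real) \<Rightarrow> nat \<Rightarrow> (real \<Rightarrow> real) \<Rightarrow> bool" where
  "is_sol_z q a r \<phi> k z \<longleftrightarrow>
     (let h = q / real k in
       (\<forall>n::int. - int k \<le> n \<and> n \<le> 0 \<longrightarrow> z (real_of_int n * h) = \<phi> (real_of_int n * h)) \<and>
       continuous_on {0..} z \<and>
       (\<forall>i::nat. \<forall>t. real i * h \<le> t \<and> t < real (Suc i) * h \<longrightarrow>
          (z has_real_derivative (- a t * z (real_of_int (int i - kidx r h i) * h)))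
            (at t within {real i * h..<real (Suc i) * h})))"

end

theory Submission imports Defs begin

lemma modset_bdd:
  fixes f :: "real \<Rightarrow> real"
  assumes "continuous_on {a..b} f"
  shows "bdd_above {\<bar>f t2 - f t1\<bar> | t1 t2. a \<le> t1 \<and> t1 \<le> b \<and> a \<le> t2 \<and> t2 \<le> b \<and> \<bar>t2 - t1\<bar> \<le> h}"
proof -
  have "bounded (f ` {a..b})"
    by (rule compact_imp_bounded[OF compact_continuous_image[OF assms compact_Icc]])
  then obtain B where B: "\<forall>y\<in>f ` {a..b}. norm y \<le> B" by (auto simp: bounded_iff)
  show ?thesis unfolding bdd_above_def
  proof (intro exI[of _ "2*B"] ballI)
    fix y assume "y \<in> {\<bar>f t2 - f t1\<bar> | t1 t2. a \<le> t1 \<and> t1 \<le> b \<and> a \<le> t2 \<and> t2 \<le> b \<and> \<bar>t2 - t1\<bar> \<le> h}"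
    then obtain t1 t2 where y: "y = \<bar>f t2 - f t1\<bar>" "t1 \<in> {a..b}" "t2 \<in> {a..b}" by auto
    have "\<bar>f t1\<bar> \<le> B" "\<bar>f t2\<bar> \<le> B" using B y by auto
    then show "y \<le> 2*B" using y by linarith
  qed
qed

lemma modset_le:
  fixes f :: "real \<Rightarrow> real"
  assumes "continuous_on {a..b} f" "a \<le> t1" "t1 \<le> b" "a \<le> t2" "t2 \<le> b" "\<bar>t2 - t1\<bar> \<le> h"
  shows "\<bar>f t2 - f t1\<bar> \<le> Sup {\<bar>f t2 - f t1\<bar> | t1 t2. a \<le> t1 \<and> t1 \<le> b \<and> a \<le> t2 \<and> t2 \<le> b \<and> \<bar>t2 - t1\<bar> \<le> h}"
  by (rule cSup_upper[OF _ modset_bdd[OF assms(1)]]) (use assms in blast)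

lemma modset_least:
  fixes f :: "real \<Rightarrow> real"
  assumes "a \<le> b" "0 \<le> h"
    and "\<And>t1 t2. a \<le> t1 \<Longrightarrow> t1 \<le> b \<Longrightarrow> a \<le> t2 \<Longrightarrow> t2 \<le> b \<Longrightarrow> \<bar>t2 - t1\<bar> \<le> h \<Longrightarrow> \<bar>f t2 - f t1\<bar> \<le> c"
  shows "Sup {\<bar>f t2 - f t1\<bar> | t1 t2. a \<le> t1 \<and> t1 \<le> b \<and> a \<le> t2 \<and> t2 \<le> b \<and> \<bar>t2 - t1\<bar> \<le> h} \<le> c"
proof (rule cSup_least)
  show "{\<bar>f t2 - f t1\<bar> | t1 t2. a \<le> t1 \<and> t1 \<le> b \<and> a \<le> t2 \<and> t2 \<le> b \<and> \<bar>t2 - t1\<bar> \<le> h} \<noteq> {}"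
    using assms(1,2) by force
qed (use assms(3) in blast)

lemma modset_nonneg:
  fixes f :: "real \<Rightarrow> real"
  assumes "continuous_on {a..b} f" "a \<le> b" "0 \<le> h"
  shows "0 \<le> Sup {\<bar>f t2 - f t1\<bar> | t1 t2. a \<le> t1 \<and> t1 \<le> b \<and> a \<le> t2 \<and> t2 \<le> b \<and> \<bar>t2 - t1\<bar> \<le> h}"
  using modset_le[OF assms(1), of a a h] assms by simp

lemma A_deriv:
  fixes a :: "real \<Rightarrow> real"
  assumes "continuous_on {0..} a" "s > 0"
  shows "((\<lambda>t. integral {0..t} a) has_real_derivative a s) (at s)"
proof -
  have c: "continuous_on {0..s+1} a" using continuous_on_subset[OF assms(1)] by auto
  have "s \<in> interior {0..s+1}" using assms(2) by auto
  then have "at s within {0..s+1} = at s" by (rule at_within_interior)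
  moreover have "((\<lambda>t. integral {0..t} a) has_real_derivative a s) (at s within {0..s+1})"
    by (rule integral_has_real_derivative[OF c]) (use assms(2) in auto)
  ultimately show ?thesis by simp
qed

lemma a_int:
  fixes a :: "real \<Rightarrow> real"
  assumes "continuous_on {0..} a" "0 \<le> s"
  shows "a integrable_on {s..t}"
proof -
  have "{s..t} \<subseteq> {0..}" using assms(2) by auto
  then have "continuous_on {s..t} a" using continuous_on_subset[OF assms(1)] by blast
  then show ?thesis by (rule integrable_continuous_interval)
qed

lemma A_cont:
  fixes a :: "real \<Rightarrow> real"
  assumes "continuous_on {0..} a"
  shows "continuous_on {0..b} (\<lambda>t. integral {0..t} a)"
  using indefinite_integral_continuous_1[OF a_int[OF assms, of 0 b]] by simp

lemma A_mono:
  fixes a :: "real \<Rightarrow> real"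
  assumes "continuous_on {0..} a" "\<forall>t\<ge>0. a t \<ge> 0" "s \<le> t"
  shows "integral {0..s} a \<le> integral {0..t} a"
proof (cases "0 \<le> s")
  case True
  have "{0..s} \<subseteq> {0..t}" using assms(3) by auto
  moreover have "\<forall>x\<in>{0..t}. 0 \<le> a x" using assms(2) by auto
  ultimately show ?thesis
    using integral_subset_le[OF _ a_int[OF assms(1), of 0 s] a_int[OF assms(1), of 0 t]] by simp
next
  case False
  then have "integral {0..s} a = 0" by simp
  moreover have "0 \<le> integral {0..t} a"
    by (rule integral_nonneg[OF a_int[OF assms(1), of 0 t]]) (use assms(2) in auto)
  ultimately show ?thesis by simp
qed


lemma main_bound:
  fixes q :: real and a r \<phi> x zk :: "real \<Rightarrow> real" and k :: nat and T :: real
  assumes q: "q > 0"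
    and ac: "continuous_on {0..} a" and ann: "\<forall>t\<ge>0. a t \<ge> 0"
    and rc: "continuous_on {0..} r" and rb: "\<forall>t\<ge>0. 0 \<le> r t \<and> r t \<le> q"
    and xs: "is_sol_x q a r \<phi> x"
    and zs: "is_sol_z q a r \<phi> k zk"
    and k: "k \<ge> 1" and T: "T > 0"
  shows "\<forall>t\<in>{0..T}. \<bar>x t - zk t\<bar> \<le> mod_x q x (mod_r r (q / real k) T + 2 * (q / real k)) T
                     * (exp (integral {0..t} a) - 1)"
proof -
  define h where "h = q / real k"
  define W where "W = mod_x q x (mod_r r h T + 2 * h) T"
  define A where "A = (\<lambda>t. integral {0..t} a)"
  define u where "u = (\<lambda>t. W * (exp (A t) - 1))"
  define e where "e = (\<lambda>t. x t - zk t)"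
  have hpos: "h > 0" using q k by (simp add: h_def)
  have kh: "real k * h = q" using k by (simp add: h_def)
  have zgrid: "\<And>n::int. - int k \<le> n \<Longrightarrow> n \<le> 0 \<Longrightarrow> zk (real_of_int n * h) = \<phi> (real_of_int n * h)"
    and zc: "continuous_on {0..} zk"
    and zd: "\<And>i t. real i * h \<le> t \<Longrightarrow> t < real (Suc i) * h \<Longrightarrow>
          (zk has_real_derivative (- a t * zk (real_of_int (int i - kidx r h i) * h)))
            (at t within {real i * h..<real (Suc i) * h})"
    using zs unfolding is_sol_z_def h_def Let_def by blast+
  have xc: "continuous_on {-q..} x" and xphi: "\<forall>t\<in>{-q..0}. x t = \<phi> t"
    and xd: "\<And>t. t \<ge> 0 \<Longrightarrow> (x has_real_derivative (- a t * x (t - r t))) (at t within {0..})"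
    using xs unfolding is_sol_x_def by blast+
  have xcT: "continuous_on {-q..T} x" using continuous_on_subset[OF xc] by auto
  have rcT: "continuous_on {0..T} r" using continuous_on_subset[OF rc] by auto
  have mr_nn: "0 \<le> mod_r r h T" unfolding mod_r_def
    by (rule modset_nonneg[OF rcT]) (use T hpos in auto)
  have Wnn: "0 \<le> W" unfolding W_def mod_x_def
    by (rule modset_nonneg[OF xcT]) (use T q hpos mr_nn in auto)
  have Wb: "\<And>t1 t2. -q \<le> t1 \<Longrightarrow> t1 \<le> T \<Longrightarrow> -q \<le> t2 \<Longrightarrow> t2 \<le> T \<Longrightarrow> \<bar>t2 - t1\<bar> \<le> mod_r r h T + 2 * h
      \<Longrightarrow> \<bar>x t2 - x t1\<bar> \<le> W"
    unfolding W_def mod_x_def by (rule modset_le[OF xcT])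
  have rB: "\<And>t1 t2. 0 \<le> t1 \<Longrightarrow> t1 \<le> T \<Longrightarrow> 0 \<le> t2 \<Longrightarrow> t2 \<le> T \<Longrightarrow> \<bar>t2 - t1\<bar> \<le> h
      \<Longrightarrow> \<bar>r t2 - r t1\<bar> \<le> mod_r r h T"
    unfolding mod_r_def by (rule modset_le[OF rcT])
  have egrid: "e (real_of_int n * h) = 0" if "- int k \<le> n" "n \<le> 0" for n :: int
  proof -
    have "real_of_int n * h \<ge> - q"
    proof -
      have "real_of_int n \<ge> - real k" using that(1) by linarith
      then have "real_of_int n * h \<ge> - real k * h" using hpos by (intro mult_right_mono) auto
      then show ?thesis using kh by simp
    qed
    moreover have "real_of_int n * h \<le> 0" using that(2) hpos by (simp add: mult_nonpos_nonneg)
    ultimately show ?thesis using xphi zgrid[OF that] by (simp add: e_def)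
  qed
  have umono: "u s \<le> u t" if "s \<le> t" for s t
    using A_mono[OF ac ann that] Wnn unfolding u_def A_def by (simp add: mult_left_mono)
  have u0: "u 0 = 0" by (simp add: u_def A_def)
  have ucont: "continuous_on {0..b} u" for b
    unfolding u_def A_def by (intro continuous_intros A_cont[OF ac])
  have uder: "(u has_real_derivative W * (exp (A s) * a s)) (at s)" if "s > 0" for s
  proof -
    have Ad: "(A has_real_derivative a s) (at s)" unfolding A_def by (rule A_deriv[OF ac that])
    show ?thesis unfolding u_def by (auto intro!: derivative_eq_intros Ad)
  qed
  have P: "\<forall>t. 0 \<le> t \<and> t \<le> T \<and> t \<le> real i * h \<longrightarrow> \<bar>e t\<bar> \<le> u t" for i
  proof (induction i)
    case 0
    have "e 0 = 0" using egrid[of 0] by simp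
    then show ?case using u0 hpos by auto
  next
    case (Suc i)
    show ?case
    proof (intro allI impI)
      fix t assume t: "0 \<le> t \<and> t \<le> T \<and> t \<le> real (Suc i) * h"
      show "\<bar>e t\<bar> \<le> u t"
      proof (cases "t \<le> real i * h")
        case True then show ?thesis using Suc.IH t by blast
      next
        case False
        define c where "c = real i * h"
        define K where "K = kidx r h i"
        define g where "g = real_of_int (int i - K) * h"
        have c0: "0 \<le> c" using hpos by (simp add: c_def)
        have ct: "c < t" using False by (simp add: c_def)
        have tS: "t \<le> real (Suc i) * h" using t by blast
        have rc0: "0 \<le> r c" "r c \<le> q" using rb c0 by auto
        have K1: "real_of_int K * h \<le> r c" "r c < real_of_int K * h + h"
        proof -
          have "real_of_int K \<le> r c / h" "r c / h < real_of_int K + 1"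
            unfolding K_def kidx_def c_def by (simp_all add: of_int_floor_le)
          then show "real_of_int K * h \<le> r c" "r c < real_of_int K * h + h"
            using hpos by (auto simp: field_simps)
        qed
        have K0: "0 \<le> K"
        proof -
          have "0 < (real_of_int K + 1) * h" using K1 rc0 by (simp add: algebra_simps)
          then have "0 < real_of_int K + 1" using hpos by (simp add: zero_less_mult_iff)
          then show ?thesis by linarith
        qed
        have Kk: "K \<le> int k"
        proof -
          have "real_of_int K * h \<le> real k * h" using K1 rc0 kh by linarith
          then have "real_of_int K \<le> real k" using hpos by simp
          then show ?thesis by linarith
        qed
        have g_eq: "g = c - real_of_int K * h" by (simp add: g_def c_def left_diff_distrib)
        have eg: "\<bar>e g\<bar> \<le> u c"
        proof (cases "int i - K < 0")
          case True
          have "e g = 0" unfolding g_def by (rule egrid) (use Kk True in auto)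
          then show ?thesis using umono[OF c0] u0 by simp
        next
          case False
          have g0: "0 \<le> g" using False hpos by (simp add: g_def)
          have gc: "g \<le> c" using g_eq K0 hpos by simp
          have "\<bar>e g\<bar> \<le> u g" using Suc.IH g0 gc ct t by (auto simp: c_def)
          then show ?thesis using umono[OF gc] by simp
        qed
        have deriv: "\<exists>y. ((\<lambda>s. u s - e s) has_real_derivative y) (at s) \<and> y \<ge> 0"
            "\<exists>y. ((\<lambda>s. u s + e s) has_real_derivative y) (at s) \<and> y \<ge> 0"
          if s: "c < s" "s < t" for s
        proof -
          have s0: "s > 0" using c0 s by simp
          have dx: "(x has_real_derivative (- a s * x (s - r s))) (at s)"
          proof -
            have "(x has_real_derivative (- a s * x (s - r s))) (at s within {0<..})"
              by (rule DERIV_subset[OF xd]) (use s0 in auto)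
            then show ?thesis using at_within_open[of s "{0<..}"] s0 by simp
          qed
          have dz: "(zk has_real_derivative (- a s * zk g)) (at s)"
          proof -
            have "(zk has_real_derivative (- a s * zk g)) (at s within {c<..<real (Suc i) * h})"
              unfolding g_def K_def
              by (rule DERIV_subset[OF zd]) (use s tS in \<open>auto simp: c_def\<close>)
            then show ?thesis using at_within_open[of s "{c<..<real (Suc i) * h}"] s tS by simp
          qed
          have de: "(e has_real_derivative (- a s * x (s - r s) - (- a s * zk g))) (at s)"
            unfolding e_def by (rule DERIV_diff[OF dx dz])
          have as: "0 \<le> a s" using ann s0 by auto
          have sT: "s \<le> T" using s t by auto
          have rs: "0 \<le> r s" "r s \<le> q" using rb s0 by auto
          have cT: "c \<le> T" using ct t by auto
          have drs: "\<bar>r s - r c\<bar> \<le> mod_r r h T"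
          proof (rule rB)
            show "0 \<le> c" "c \<le> T" "0 \<le> s" "s \<le> T" using c0 cT s0 sT by auto
            show "\<bar>s - c\<bar> \<le> h" using s tS by (simp add: c_def algebra_simps abs_le_iff)
          qed
          have gq: "-q \<le> g"
          proof -
            have "real_of_int K * h \<le> q" using K1 rc0 by linarith
            then show ?thesis using g_eq c0 by linarith
          qed
          have xW: "\<bar>x (s - r s) - x g\<bar> \<le> W"
          proof (rule Wb)
            show "-q \<le> g" by (rule gq)
            show "g \<le> T" using g_eq K0 hpos cT by (smt (verit) mult_nonneg_nonneg of_int_nonneg)
            show "-q \<le> s - r s" using rs s0 by linarith
            show "s - r s \<le> T" using rs sT by linarith
            have sc: "s - c \<le> h" using tS s by (simp add: c_def algebra_simps)
            have e1: "s - r s - g = (s - c) + (real_of_int K * h - r c) + (r c - r s)" by (simp add: g_eq)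
            show "\<bar>s - r s - g\<bar> \<le> mod_r r h T + 2 * h"
              using e1 sc s K1 drs by (simp only: abs_le_iff) linarith
          qed
          have eg': "\<bar>x g - zk g\<bar> \<le> u c" using eg by (simp add: e_def)
          have "\<bar>- a s * x (s - r s) - (- a s * zk g)\<bar> = a s * \<bar>(x (s - r s) - x g) + (x g - zk g)\<bar>"
          proof -
            have "- a s * x (s - r s) - (- a s * zk g) = - (a s * ((x (s - r s) - x g) + (x g - zk g)))"
              by (simp add: algebra_simps)
            then show ?thesis by (simp only: abs_minus_cancel abs_mult abs_of_nonneg[OF as])
          qed
          also have "\<dots> \<le> a s * (W + u c)"
          proof (rule mult_left_mono[OF _ as])
            show "\<bar>(x (s - r s) - x g) + (x g - zk g)\<bar> \<le> W + u c"
              using abs_triangle_ineq[of "x (s - r s) - x g" "x g - zk g"] xW eg' by linarith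
          qed
          also have "\<dots> \<le> a s * (W + u s)" using umono[of c s] s as by (intro mult_left_mono) auto
          also have "\<dots> = W * (exp (A s) * a s)" by (simp add: u_def algebra_simps)
          finally have bnd: "\<bar>- a s * x (s - r s) - (- a s * zk g)\<bar> \<le> W * (exp (A s) * a s)" .
          show "\<exists>y. ((\<lambda>s. u s - e s) has_real_derivative y) (at s) \<and> y \<ge> 0"
            using DERIV_diff[OF uder[OF s0] de] bnd by (intro exI conjI) (auto simp: abs_le_iff)
          show "\<exists>y. ((\<lambda>s. u s + e s) has_real_derivative y) (at s) \<and> y \<ge> 0"
            using DERIV_add[OF uder[OF s0] de] bnd by (intro exI conjI) (auto simp: abs_le_iff)
        qed
        have ecT: "continuous_on {c..t} e"
        proof -
          have "continuous_on {c..t} x" using continuous_on_subset[OF xc] c0 q by auto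
          moreover have "continuous_on {c..t} zk" using continuous_on_subset[OF zc] c0 by auto
          ultimately show ?thesis unfolding e_def by (intro continuous_intros)
        qed
        have ucT: "continuous_on {c..t} u" using continuous_on_subset[OF ucont[of t]] c0 by auto
        have m1: "u c - e c \<le> u t - e t"
          by (rule DERIV_nonneg_imp_increasing_open[of c t "\<lambda>s. u s - e s", OF _ deriv(1)])
             (use ct continuous_on_diff[OF ucT ecT] continuous_on_add[OF ucT ecT] in auto)
        have m2: "u c + e c \<le> u t + e t"
          by (rule DERIV_nonneg_imp_increasing_open[of c t "\<lambda>s. u s + e s", OF _ deriv(2)])
             (use ct continuous_on_diff[OF ucT ecT] continuous_on_add[OF ucT ecT] in auto)
        have "\<bar>e c\<bar> \<le> u c" using Suc.IH c0 ct t by (auto simp: c_def)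
        then show ?thesis using m1 m2 by linarith
      qed
    qed
  qed
  show ?thesis
  proof
    fix t assume t: "t \<in> {0..T}"
    obtain n where n: "t / h \<le> real n" using real_arch_simple by blast
    then have "t \<le> real n * h" using hpos by (simp add: field_simps)
    then have "\<bar>e t\<bar> \<le> u t" using P[of n] t by auto
    then show "\<bar>x t - zk t\<bar> \<le> mod_x q x (mod_r r (q / real k) T + 2 * (q / real k)) T * (exp (integral {0..t} a) - 1)"
      by (simp add: e_def u_def W_def A_def h_def)
  qed
qed


lemma exp_aux: "0 \<le> (y::real) \<Longrightarrow> exp y - 1 \<le> y * exp y"
proof -
  assume y: "0 \<le> y"
  have "1 + (-y) \<le> exp (-y)" by (rule exp_ge_add_one_self)
  then have "(1 - y) * exp y \<le> exp (-y) * exp y" by (intro mult_right_mono) auto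
  then show ?thesis by (simp add: exp_minus algebra_simps)
qed

theorem theorem3p2:
  fixes q :: real and a r \<phi> x :: "real \<Rightarrow> real" and z :: "nat \<Rightarrow> real \<Rightarrow> real"
  assumes "q > 0"
    and "continuous_on {0..} a" and "\<forall>t\<ge>0. a t \<ge> 0"
    and "continuous_on {0..} r" and "\<forall>t\<ge>0. 0 \<le> r t \<and> r t \<le> q"
    and "continuous_on {-q..0} \<phi>"
    and "is_sol_x q a r \<phi> x"
    and "\<forall>k\<ge>1. is_sol_z q a r \<phi> k (z k)"
  shows "(\<forall>k\<ge>1. \<forall>T>0.
            Sup ((\<lambda>t. \<bar>x t - z k t\<bar>) ` {0..T})
              \<le> exp (integral {0..T} a) * integral {0..T} a
                 * mod_x q x (mod_r r (q / real k) T + 2 * (q / real k)) T)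
       \<and> (\<forall>T>0. (\<lambda>k. Sup ((\<lambda>t. \<bar>x t - z k t\<bar>) ` {0..T})) \<longlonglongrightarrow> 0)"
proof -
  note q = assms(1) and ac = assms(2) and ann = assms(3) and rc = assms(4) and rb = assms(5)
    and xs = assms(7) and zs = assms(8)
  have xc: "continuous_on {-q..} x" using xs unfolding is_sol_x_def by blast
  have AT0: "0 \<le> integral {0..T} a" if "T \<ge> 0" for T
    using A_mono[OF ac ann that] by simp
  have modr_nn: "0 \<le> mod_r r h T" if "T > 0" "h \<ge> 0" for h T
  proof -
    have "continuous_on {0..T} r" using continuous_on_subset[OF rc] by auto
    then show ?thesis unfolding mod_r_def by (rule modset_nonneg) (use that in auto)
  qed
  have modx_nn: "0 \<le> mod_x q x d T" if "T > 0" "d \<ge> 0" for d T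
  proof -
    have "continuous_on {-q..T} x" using continuous_on_subset[OF xc] by auto
    then show ?thesis unfolding mod_x_def by (rule modset_nonneg) (use that q in auto)
  qed
  have elem: "\<bar>x t - z k t\<bar> \<le> exp (integral {0..T} a) * integral {0..T} a
                 * mod_x q x (mod_r r (q / real k) T + 2 * (q / real k)) T"
    if k: "k \<ge> 1" and T: "T > 0" and t: "t \<in> {0..T}" for k T t
  proof -
    define W where "W = mod_x q x (mod_r r (q / real k) T + 2 * (q / real k)) T"
    have Wnn: "0 \<le> W" unfolding W_def
      by (rule modx_nn[OF T]) (use modr_nn[OF T, of "q / real k"] q in auto)
    have b: "\<bar>x t - z k t\<bar> \<le> W * (exp (integral {0..t} a) - 1)"
      using main_bound[OF q ac ann rc rb xs zs[rule_format, OF k] k T] t unfolding W_def by blast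
    have "integral {0..t} a \<le> integral {0..T} a" using A_mono[OF ac ann] t by auto
    then have "exp (integral {0..t} a) - 1 \<le> exp (integral {0..T} a) - 1" by simp
    also have "\<dots> \<le> integral {0..T} a * exp (integral {0..T} a)" by (rule exp_aux[OF AT0]) (use T in auto)
    finally have "W * (exp (integral {0..t} a) - 1) \<le> W * (integral {0..T} a * exp (integral {0..T} a))"
      using Wnn by (intro mult_left_mono) auto
    with b show ?thesis by (simp add: W_def algebra_simps)
  qed
  have part1: "Sup ((\<lambda>t. \<bar>x t - z k t\<bar>) ` {0..T})
              \<le> exp (integral {0..T} a) * integral {0..T} a
                 * mod_x q x (mod_r r (q / real k) T + 2 * (q / real k)) T"
    if k: "k \<ge> 1" and T: "T > 0" for k T
    by (rule cSup_least) (use T elem[OF k T] in auto)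
  have Sup_nn: "0 \<le> Sup ((\<lambda>t. \<bar>x t - z k t\<bar>) ` {0..T})" if k: "k \<ge> 1" and T: "T > 0" for k T
  proof -
    have "bdd_above ((\<lambda>t. \<bar>x t - z k t\<bar>) ` {0..T})"
      unfolding bdd_above_def using elem[OF k T] by (intro exI[of _ "exp (integral {0..T} a) * integral {0..T} a
                 * mod_x q x (mod_r r (q / real k) T + 2 * (q / real k)) T"]) blast
    then have "\<bar>x 0 - z k 0\<bar> \<le> Sup ((\<lambda>t. \<bar>x t - z k t\<bar>) ` {0..T})"
      by (rule cSup_upper[rotated]) (use T in auto)
    then show ?thesis by linarith
  qed
  have part2: "(\<lambda>k. Sup ((\<lambda>t. \<bar>x t - z k t\<bar>) ` {0..T})) \<longlonglongrightarrow> 0" if T: "T > 0" for T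
  proof (rule LIMSEQ_I)
    fix \<epsilon> :: real assume eps: "\<epsilon> > 0"
    define C where "C = exp (integral {0..T} a) * integral {0..T} a"
    have C0: "0 \<le> C" unfolding C_def using AT0[of T] T by auto
    have xcT: "continuous_on {-q..T} x" using continuous_on_subset[OF xc] by auto
    have rcT: "continuous_on {0..T} r" using continuous_on_subset[OF rc] by auto
    have "uniformly_continuous_on {-q..T} x" by (rule compact_uniformly_continuous[OF xcT compact_Icc])
    moreover have "\<epsilon> / (C + 1) > 0" using eps C0 by auto
    ultimately obtain d1 where d1: "d1 > 0"
      "\<And>t1 t2. t1 \<in> {-q..T} \<Longrightarrow> t2 \<in> {-q..T} \<Longrightarrow> dist t2 t1 < d1 \<Longrightarrow> dist (x t2) (x t1) < \<epsilon> / (C + 1)"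
      unfolding uniformly_continuous_on_def by metis
    have "uniformly_continuous_on {0..T} r" by (rule compact_uniformly_continuous[OF rcT compact_Icc])
    moreover have "d1 / 2 > 0" using d1 by auto
    ultimately obtain d2 where d2: "d2 > 0"
      "\<And>t1 t2. t1 \<in> {0..T} \<Longrightarrow> t2 \<in> {0..T} \<Longrightarrow> dist t2 t1 < d2 \<Longrightarrow> dist (r t2) (r t1) < d1 / 2"
      unfolding uniformly_continuous_on_def by metis
    define m where "m = min d2 (d1 / 4)"
    have m0: "m > 0" using d1 d2 by (simp add: m_def)
    obtain N :: nat where N: "q / m < real N" using reals_Archimedean2 by blast
    have N1: "N \<ge> 1"
    proof -
      have "0 < q / m" using q m0 by simp
      then show ?thesis using N by (cases N) auto
    qed
    show "\<exists>no. \<forall>k\<ge>no. norm (Sup ((\<lambda>t. \<bar>x t - z k t\<bar>) ` {0..T}) - 0) < \<epsilon>"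
    proof (intro exI allI impI)
      fix k assume kN: "N \<le> k"
      have k: "k \<ge> 1" using kN N1 by simp
      define h where "h = q / real k"
      have hpos: "0 < h" using q k by (simp add: h_def)
      have hm: "h < m"
      proof -
        have "q / m < real k" using N kN by linarith
        then have "q < m * real k" using m0 by (simp add: field_simps)
        then show ?thesis using k by (simp add: h_def field_simps)
      qed
      have mr: "mod_r r h T \<le> d1 / 2" unfolding mod_r_def
      proof (rule modset_least)
        fix t1 t2 assume "0 \<le> t1" "t1 \<le> T" "0 \<le> t2" "t2 \<le> T" "\<bar>t2 - t1\<bar> \<le> h"
        then show "\<bar>r t2 - r t1\<bar> \<le> d1 / 2"
          using d2(2)[of t1 t2] hm by (simp add: dist_real_def m_def)
      qed (use T hpos in auto)
      have mx: "mod_x q x (mod_r r h T + 2 * h) T \<le> \<epsilon> / (C + 1)" unfolding mod_x_def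
      proof (rule modset_least)
        fix t1 t2 assume "-q \<le> t1" "t1 \<le> T" "-q \<le> t2" "t2 \<le> T" "\<bar>t2 - t1\<bar> \<le> mod_r r h T + 2 * h"
        moreover have "mod_r r h T + 2 * h < d1" using mr hm by (simp add: m_def)
        ultimately show "\<bar>x t2 - x t1\<bar> \<le> \<epsilon> / (C + 1)"
          using d1(2)[of t1 t2] by (simp add: dist_real_def)
      qed (use T q hpos modr_nn[OF T, of h] in auto)
      have "Sup ((\<lambda>t. \<bar>x t - z k t\<bar>) ` {0..T}) \<le> C * mod_x q x (mod_r r h T + 2 * h) T"
        using part1[OF k T] by (simp add: C_def h_def)
      also have "\<dots> \<le> C * (\<epsilon> / (C + 1))" using mx C0 by (intro mult_left_mono) auto
      also have "\<dots> < \<epsilon>" using C0 eps by (simp add: field_simps)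
      finally show "norm (Sup ((\<lambda>t. \<bar>x t - z k t\<bar>) ` {0..T}) - 0) < \<epsilon>"
        using Sup_nn[OF k T] by simp
    qed
  qed
  show ?thesis using part1 part2 by blast
qed

end
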